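(* Let $X,X_1,X_2,\dots$ be i.i.d. positive random variables with $\mathbb{E}X=1$, let $p\ge2$ be an integer, and suppose $\mathbb{E}X^p<\infty$. For $n\ge p$ let $$\xi_n=\frac{X_1^2\cdots X_p^2}{\left(\frac1n(X_1+\dots+X_n)\right)^p}.$$ Then $\mathbb{E}\xi_n\to(\mathbb{E}X^2)^p$ as $n\to\infty$. *)

theory Defs
  imports "HOL-Probability.Probability"
begin

end

theory Submission imports Defs begin

lemma inv_pow_tangent:
  fixes t :: real assumes t: "t > 0"
  shows "1 - real p * (t - 1) \<le> (1 / t) ^ p"
proof -
  have "1 + real p * (1 / t - 1) \<le> (1 + (1 / t - 1)) ^ p"
    by (rule Bernoulli_inequality) (use t in simp)
  moreover have "1 - t \<le> 1 / t - 1"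
  proof -
    have "0 \<le> (t - 1)^2 / t" using t by simp
    also have "(t - 1)^2 / t = t - 2 + 1 / t" using t by (simp add: field_simps power2_eq_square)
    finally show ?thesis by simp
  qed
  then have "1 - real p * (t - 1) \<le> 1 + real p * (1 / t - 1)"
  proof -
    have "real p * (1 - t) \<le> real p * (1 / t - 1)" by (rule mult_left_mono[OF \<open>1 - t \<le> 1 / t - 1\<close>]) simp
    then show ?thesis by (simp add: algebra_simps)
  qed
  ultimately show ?thesis by simp
qed

lemma inv_pow_tangent2:
  fixes a c y :: real assumes a: "a > 0" and c: "c > 0" and y: "y \<ge> 0"
  shows "y / c ^ p - real p * (y / c ^ (p + 1)) * (a - c) \<le> y / a ^ p"
proof -
  have "1 - real p * (a / c - 1) \<le> (1 / (a / c)) ^ p"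
    by (rule inv_pow_tangent) (use a c in simp)
  then have "(1 - real p * (a / c - 1)) / c ^ p \<le> (c / a) ^ p / c ^ p"
    using c by (intro divide_right_mono) auto
  also have "(c / a) ^ p / c ^ p = 1 / a ^ p" using a c by (simp add: power_divide)
  also have "(1 - real p * (a / c - 1)) / c ^ p = 1 / c ^ p - real p * (1 / c ^ (p + 1)) * (a - c)"
    using c by (simp add: field_simps)
  finally have "1 / c ^ p - real p * (1 / c ^ (p + 1)) * (a - c) \<le> 1 / a ^ p" .
  then have "y * (1 / c ^ p - real p * (1 / c ^ (p + 1)) * (a - c)) \<le> y * (1 / a ^ p)"
    by (rule mult_left_mono[OF _ y])
  then show ?thesis by (simp add: field_simps)
qed

locale L3 = prob_space +
  fixes X :: "nat \<Rightarrow> 'a \<Rightarrow> real" and p :: nat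
  assumes rv[measurable]: "\<And>i. X i \<in> borel_measurable M"
    and indep: "indep_vars (\<lambda>_. borel) X UNIV"
    and ident: "\<And>i. distr M borel (X i) = distr M borel (X 0)"
    and pos: "\<And>i \<omega>. \<omega> \<in> space M \<Longrightarrow> X i \<omega> > 0"
    and int1: "integrable M (X 0)"
    and mean: "expectation (X 0) = 1"
    and p2: "p \<ge> 2"
    and intp: "integrable M (\<lambda>\<omega>. X 0 \<omega> ^ p)"
begin

lemma integral_ident:
  fixes f :: "real \<Rightarrow> real"
  assumes [measurable]: "f \<in> borel_measurable borel"
  shows "(\<integral>\<omega>. f (X i \<omega>) \<partial>M) = (\<integral>\<omega>. f (X 0 \<omega>) \<partial>M)"
proof -
  have "(\<integral>\<omega>. f (X i \<omega>) \<partial>M) = integral\<^sup>L (distr M borel (X i)) f"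
    by (simp add: integral_distr)
  also have "\<dots> = integral\<^sup>L (distr M borel (X 0)) f" by (simp add: ident[of i])
  also have "\<dots> = (\<integral>\<omega>. f (X 0 \<omega>) \<partial>M)" by (simp add: integral_distr)
  finally show ?thesis .
qed

lemma integrable_ident:
  fixes f :: "real \<Rightarrow> real"
  assumes [measurable]: "f \<in> borel_measurable borel" and "integrable M (\<lambda>\<omega>. f (X 0 \<omega>))"
  shows "integrable M (\<lambda>\<omega>. f (X i \<omega>))"
proof -
  have "integrable (distr M borel (X 0)) f" using assms by (simp add: integrable_distr_eq)
  then have "integrable (distr M borel (X i)) f" by (simp add: ident[of i])
  then show ?thesis by (simp add: integrable_distr_eq)
qed

lemma int_sq0: "integrable M (\<lambda>\<omega>. (X 0 \<omega>)\<^sup>2)"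
proof (rule Bochner_Integration.integrable_bound[where f="\<lambda>\<omega>. 1 + X 0 \<omega> ^ p"])
  show "integrable M (\<lambda>\<omega>. 1 + X 0 \<omega> ^ p)" using intp by simp
  show "AE x in M. norm ((X 0 x)\<^sup>2) \<le> norm (1 + X 0 x ^ p)"
  proof (rule AE_I2)
    fix x assume x: "x \<in> space M"
    have xp: "X 0 x > 0" using pos[OF x] .
    have "(X 0 x)\<^sup>2 \<le> 1 + X 0 x ^ p"
    proof (cases "X 0 x \<le> 1")
      case True then have "(X 0 x)\<^sup>2 \<le> 1" using xp by (simp add: power_le_one)
      moreover have "0 \<le> X 0 x ^ p" using xp by simp
      ultimately show ?thesis by linarith
    next
      case False then have "(X 0 x)^2 \<le> X 0 x ^ p" using p2 by (intro power_increasing) simp_all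
      then show ?thesis by simp
    qed
    then show "norm ((X 0 x)\<^sup>2) \<le> norm (1 + X 0 x ^ p)" using xp by simp
  qed
qed simp

lemma int_sq: "integrable M (\<lambda>\<omega>. (X i \<omega>)\<^sup>2)"
  using integrable_ident[of "\<lambda>x. x^2", OF _ int_sq0] by simp

lemma int_X: "integrable M (X i)"
  using integrable_ident[of "\<lambda>x. x", OF _ int1] by simp

lemma mean_i: "expectation (X i) = 1"
  using integral_ident[of "\<lambda>x. x" i] mean by simp

lemma sq_i: "expectation (\<lambda>\<omega>. (X i \<omega>)\<^sup>2) = expectation (\<lambda>\<omega>. (X 0 \<omega>)\<^sup>2)"
  using integral_ident[of "\<lambda>x. x^2" i] by simp

definition "Y \<omega> = (\<Prod>i<p. (X i \<omega>)\<^sup>2)"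
definition "Q \<omega> = (\<Prod>i<p. X i \<omega>)"
definition "R \<omega> = (\<Sum>i<p. X i \<omega>)"

lemma Y_meas[measurable]: "Y \<in> borel_measurable M" unfolding Y_def by measurable
lemma Q_meas[measurable]: "Q \<in> borel_measurable M" unfolding Q_def by measurable
lemma R_meas[measurable]: "R \<in> borel_measurable M" unfolding R_def by measurable

lemma Y_int: "integrable M Y" and EY: "expectation Y = (expectation (\<lambda>\<omega>. (X 0 \<omega>)\<^sup>2)) ^ p"
proof -
  have ind: "indep_vars (\<lambda>_. borel) (\<lambda>i \<omega>. (X i \<omega>)\<^sup>2) {..<p}"
    using indep_vars_compose2[OF indep_vars_subset[OF indep, of "{..<p}"], where Y="\<lambda>i x. x^2" and N="\<lambda>_. borel"] by simp
  show "integrable M Y" unfolding Y_def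
    by (rule indep_vars_integrable[OF _ ind]) (auto simp: int_sq)
  show "expectation Y = (expectation (\<lambda>\<omega>. (X 0 \<omega>)\<^sup>2)) ^ p" unfolding Y_def
  proof (subst indep_vars_lebesgue_integral[OF _ ind])
    show "(\<Prod>i\<in>{..<p}. expectation (\<lambda>\<omega>. (X i \<omega>)\<^sup>2)) = (expectation (\<lambda>\<omega>. (X 0 \<omega>)\<^sup>2)) ^ p"
      by (subst prod.cong[OF refl sq_i]) simp
  qed (auto simp: int_sq)
qed

lemma Q_int: "integrable M Q" and EQ: "expectation Q = 1"
proof -
  have ind: "indep_vars (\<lambda>_. borel) X {..<p}"
    by (rule indep_vars_subset[OF indep]) auto
  show "integrable M Q" unfolding Q_def
    by (rule indep_vars_integrable[OF _ ind]) (auto simp: int_X)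
  show "expectation Q = 1" unfolding Q_def
    by (subst indep_vars_lebesgue_integral[OF _ ind]) (auto simp: int_X mean_i)
qed

lemma indep_split:
  fixes F G :: "(nat \<Rightarrow> real) \<Rightarrow> real"
  assumes [measurable]: "F \<in> borel_measurable (PiM {..<p} (\<lambda>_. borel))"
    "G \<in> borel_measurable (PiM {p..<n} (\<lambda>_. borel))"
    and iF: "integrable M (\<lambda>\<omega>. F (restrict (\<lambda>i. X i \<omega>) {..<p}))"
    and iG: "integrable M (\<lambda>\<omega>. G (restrict (\<lambda>i. X i \<omega>) {p..<n}))"
  shows "expectation (\<lambda>\<omega>. F (restrict (\<lambda>i. X i \<omega>) {..<p}) * G (restrict (\<lambda>i. X i \<omega>) {p..<n}))
     = expectation (\<lambda>\<omega>. F (restrict (\<lambda>i. X i \<omega>) {..<p})) * expectation (\<lambda>\<omega>. G (restrict (\<lambda>i. X i \<omega>) {p..<n}))"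
   and "integrable M (\<lambda>\<omega>. F (restrict (\<lambda>i. X i \<omega>) {..<p}) * G (restrict (\<lambda>i. X i \<omega>) {p..<n}))"
proof -
  have "indep_var (PiM {..<p} (\<lambda>_. borel)) (\<lambda>\<omega>. restrict (\<lambda>i. X i \<omega>) {..<p})
       (PiM {p..<n} (\<lambda>_. borel)) (\<lambda>\<omega>. restrict (\<lambda>i. X i \<omega>) {p..<n})"
    by (rule indep_var_restrict[OF indep]) auto
  from indep_var_compose[OF this assms(1,2)]
  have iv: "indep_var borel (\<lambda>\<omega>. F (restrict (\<lambda>i. X i \<omega>) {..<p})) borel (\<lambda>\<omega>. G (restrict (\<lambda>i. X i \<omega>) {p..<n}))"
    by (simp add: comp_def)
  show "expectation (\<lambda>\<omega>. F (restrict (\<lambda>i. X i \<omega>) {..<p}) * G (restrict (\<lambda>i. X i \<omega>) {p..<n}))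
     = expectation (\<lambda>\<omega>. F (restrict (\<lambda>i. X i \<omega>) {..<p})) * expectation (\<lambda>\<omega>. G (restrict (\<lambda>i. X i \<omega>) {p..<n}))"
    by (rule indep_var_lebesgue_integral[OF iv iF iG])
  show "integrable M (\<lambda>\<omega>. F (restrict (\<lambda>i. X i \<omega>) {..<p}) * G (restrict (\<lambda>i. X i \<omega>) {p..<n}))"
    by (rule indep_var_integrable[OF iv iF iG])
qed


lemma sum_split_p:
  fixes f :: "nat \<Rightarrow> real"
  assumes "p \<le> n"
  shows "(\<Sum>i<n. f i) = (\<Sum>i<p. f i) + (\<Sum>i\<in>{p..<n}. f i)"
proof -
  have "(\<Sum>i<n. f i) = (\<Sum>i\<in>{0..<n}. f i)" by (simp add: lessThan_atLeast0)
  also have "\<dots> = (\<Sum>i\<in>{0..<p}. f i) + (\<Sum>i\<in>{p..<n}. f i)"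
    using assms by (simp add: sum.atLeastLessThan_concat)
  finally show ?thesis by (simp add: lessThan_atLeast0)
qed

lemma Q_le: "\<omega> \<in> space M \<Longrightarrow> Q \<omega> \<le> R \<omega> ^ p"
proof -
  assume w: "\<omega> \<in> space M"
  have "Q \<omega> \<le> (\<Prod>i<p. R \<omega>)" unfolding Q_def
  proof (rule prod_mono)
    fix i assume i: "i \<in> {..<p}"
    have "X i \<omega> \<le> R \<omega>" unfolding R_def
      by (rule member_le_sum) (use i pos[OF w] in \<open>auto intro: less_imp_le\<close>)
    then show "0 \<le> X i \<omega> \<and> X i \<omega> \<le> R \<omega>" using pos[OF w, of i] by auto
  qed
  then show ?thesis by simp
qed

lemma Q_pos: "\<omega> \<in> space M \<Longrightarrow> Q \<omega> > 0"
  unfolding Q_def using pos by (auto intro: prod_pos)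

lemma R_pos: "\<omega> \<in> space M \<Longrightarrow> R \<omega> > 0"
proof -
  assume w: "\<omega> \<in> space M"
  have "{..<p} \<noteq> {}" using p2 by (auto simp: lessThan_empty_iff)
  then show ?thesis unfolding R_def using pos[OF w] by (intro sum_pos) auto
qed

lemma Y_eq: "Y \<omega> = Q \<omega> * Q \<omega>"
  unfolding Y_def Q_def by (simp add: power2_eq_square prod.distrib)

lemma Y_le: "\<omega> \<in> space M \<Longrightarrow> Y \<omega> \<le> Q \<omega> * R \<omega> ^ p"
  using Q_le[of \<omega>] Q_pos[of \<omega>] by (simp add: Y_eq)

definition "S n \<omega> = (\<Sum>i\<in>{p..<n}. X i \<omega>)"
lemma S_meas[measurable]: "S n \<in> borel_measurable M" unfolding S_def by measurable
lemma S_nonneg: "\<omega> \<in> space M \<Longrightarrow> S n \<omega> \<ge> 0"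
  unfolding S_def using pos by (auto intro: sum_nonneg less_imp_le)

definition "xi n \<omega> = Y \<omega> / ((\<Sum>i<n. X i \<omega>) / real n) ^ p"
lemma xi_meas[measurable]: "xi n \<in> borel_measurable M" unfolding xi_def by measurable

lemma xi_eq: "p \<le> n \<Longrightarrow> xi n \<omega> = Y \<omega> / ((R \<omega> + S n \<omega>) / real n) ^ p"
  unfolding xi_def R_def S_def using sum_split_p[where n=n and f="\<lambda>i. X i \<omega>"] by simp

lemma xi_le: assumes "p \<le> n" "\<omega> \<in> space M" shows "xi n \<omega> \<le> real n ^ p * Q \<omega>"
proof -
  have n: "n > 0" using assms p2 by auto
  have R: "R \<omega> > 0" using R_pos assms by auto
  have S: "S n \<omega> \<ge> 0" using S_nonneg assms by auto
  have "xi n \<omega> = Y \<omega> * real n ^ p / (R \<omega> + S n \<omega>) ^ p"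
    using assms n by (simp add: xi_eq power_divide)
  also have "\<dots> \<le> Q \<omega> * R \<omega> ^ p * real n ^ p / (R \<omega> + S n \<omega>) ^ p"
    using Y_le[OF assms(2)] R S by (intro divide_right_mono mult_right_mono) auto
  also have "\<dots> \<le> Q \<omega> * (R \<omega> + S n \<omega>) ^ p * real n ^ p / (R \<omega> + S n \<omega>) ^ p"
    using Q_pos[OF assms(2)] R S
    by (intro divide_right_mono mult_right_mono mult_left_mono power_mono) auto
  also have "\<dots> = real n ^ p * Q \<omega>" using R S by simp
  finally show ?thesis .
qed

lemma xi_nonneg: assumes "p \<le> n" "\<omega> \<in> space M" shows "xi n \<omega> \<ge> 0"
proof -
  have n: "n > 0" using assms p2 by auto
  have "R \<omega> + S n \<omega> > 0" using R_pos[OF assms(2)] S_nonneg[OF assms(2), of n] by linarith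
  then show ?thesis using assms n by (simp add: xi_eq Y_eq)
qed

lemma xi_int: assumes "p \<le> n" shows "integrable M (xi n)"
proof (rule Bochner_Integration.integrable_bound[where f="\<lambda>\<omega>. real n ^ p * Q \<omega>"])
  show "integrable M (\<lambda>\<omega>. real n ^ p * Q \<omega>)" using Q_int by simp
  show "AE x in M. norm (xi n x) \<le> norm (real n ^ p * Q x)"
  proof (rule AE_I2)
    fix x assume x: "x \<in> space M"
    have "xi n x \<le> real n ^ p * Q x" by (rule xi_le[OF assms x])
    then show "norm (xi n x) \<le> norm (real n ^ p * Q x)" using xi_nonneg[OF assms x] Q_pos[OF x] by simp
  qed
qed simp


lemma Y_nonneg: "Y \<omega> \<ge> 0" by (simp add: Y_eq)

lemma restr_p: "(\<lambda>i\<in>{..<p}. X i \<omega>) i = X i \<omega>" if "i < p" for i \<omega>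
  using that by simp

lemma S_int: "integrable M (S n)" unfolding S_def by (auto intro: int_X)
lemma ES: "expectation (S n) = real (n - p)" unfolding S_def
  by (subst Bochner_Integration.integral_sum) (auto simp: int_X mean_i)

lemma lower: assumes "p \<le> n"
  shows "expectation (\<lambda>\<omega>. Y \<omega> / (1 + R \<omega> / real n) ^ p) \<le> expectation (xi n)"
proof -
  have n: "n > 0" using assms p2 by auto
  define c where "c \<omega> = 1 + R \<omega> / real n" for \<omega>
  define W where "W \<omega> = Y \<omega> / c \<omega> ^ (p+1)" for \<omega>
  have cm[measurable]: "c \<in> borel_measurable M"
    unfolding c_def[abs_def] by measurable
  have Wm[measurable]: "W \<in> borel_measurable M"
    unfolding W_def[abs_def] by measurable
  have c1: "c \<omega> \<ge> 1" if "\<omega> \<in> space M" for \<omega>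
    using R_pos[OF that] n unfolding c_def by simp
  have W_int: "integrable M W"
  proof (rule Bochner_Integration.integrable_bound[OF Y_int])
    show "AE x in M. norm (W x) \<le> norm (Y x)"
    proof (rule AE_I2)
      fix x assume x: "x \<in> space M"
      have "1 \<le> c x ^ (p+1)" by (rule one_le_power[OF c1[OF x]])
      then have "Y x / c x ^ (p+1) \<le> Y x / 1" using Y_nonneg[of x]
        by (intro divide_left_mono) auto
      then have "W x \<le> Y x" unfolding W_def by simp
      then show "norm (W x) \<le> norm (Y x)" using Y_nonneg[of x] c1[OF x] unfolding W_def by simp
    qed
  qed simp
  have Yc_int: "integrable M (\<lambda>\<omega>. Y \<omega> / c \<omega> ^ p)"
  proof (rule Bochner_Integration.integrable_bound[OF Y_int])
    show "AE x in M. norm (Y x / c x ^ p) \<le> norm (Y x)"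
    proof (rule AE_I2)
      fix x assume x: "x \<in> space M"
      have "1 \<le> c x ^ p" using c1[OF x] by (simp add: one_le_power)
      then have "Y x / c x ^ p \<le> Y x / 1" using Y_nonneg[of x]
        by (intro divide_left_mono) auto
      then have "Y x / c x ^ p \<le> Y x" by simp
      then show "norm (Y x / c x ^ p) \<le> norm (Y x)" using Y_nonneg[of x] c1[OF x] by simp
    qed
  qed simp
  define F where "F x = (\<Prod>i<p. (x i)\<^sup>2) / (1 + (\<Sum>i<p. x i) / real n) ^ (p+1)" for x :: "nat \<Rightarrow> real"
  define G where "G x = (\<Sum>i\<in>{p..<n}. x i)" for x :: "nat \<Rightarrow> real"
  have FW: "F (restrict (\<lambda>i. X i \<omega>) {..<p}) = W \<omega>" for \<omega>
    unfolding F_def W_def c_def Y_def R_def by simp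
  have GS: "G (restrict (\<lambda>i. X i \<omega>) {p..<n}) = S n \<omega>" for \<omega>
    unfolding G_def S_def by simp
  have Fm: "F \<in> borel_measurable (PiM {..<p} (\<lambda>_. borel))" unfolding F_def by measurable
  have Gm: "G \<in> borel_measurable (PiM {p..<n} (\<lambda>_. borel))" unfolding G_def by measurable
  note sp = indep_split[OF Fm Gm, unfolded FW GS, OF W_int S_int]
  have WS_int: "integrable M (\<lambda>\<omega>. W \<omega> * S n \<omega>)" by (rule sp(2))
  have EWS: "expectation (\<lambda>\<omega>. W \<omega> * S n \<omega>) = expectation W * real (n - p)"
    using sp(1) ES by simp
  have pw: "Y \<omega> / c \<omega> ^ p - real p / real n * (W \<omega> * S n \<omega>) + real p * W \<omega> \<le> xi n \<omega>"
    if w: "\<omega> \<in> space M" for \<omega>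
  proof -
    have a: "(R \<omega> + S n \<omega>) / real n > 0"
      using R_pos[OF w] S_nonneg[OF w, of n] n by simp
    have "Y \<omega> / c \<omega> ^ p - real p * (Y \<omega> / c \<omega> ^ (p + 1)) * ((R \<omega> + S n \<omega>) / real n - c \<omega>)
        \<le> Y \<omega> / ((R \<omega> + S n \<omega>) / real n) ^ p"
      by (rule inv_pow_tangent2[OF a]) (use c1[OF w] Y_nonneg in auto)
    moreover have "(R \<omega> + S n \<omega>) / real n - c \<omega> = S n \<omega> / real n - 1"
      unfolding c_def using n by (simp add: field_simps)
    ultimately have "Y \<omega> / c \<omega> ^ p - real p * W \<omega> * (S n \<omega> / real n - 1) \<le> xi n \<omega>"
      unfolding W_def by (simp add: xi_eq[OF assms])
    moreover have "real p * W \<omega> * (S n \<omega> / real n - 1) = real p / real n * (W \<omega> * S n \<omega>) - real p * W \<omega>"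
      using n by (simp add: field_simps)
    ultimately show ?thesis by simp
  qed
  have i1: "integrable M (\<lambda>\<omega>. Y \<omega> / c \<omega> ^ p - real p / real n * (W \<omega> * S n \<omega>))"
    by (intro Bochner_Integration.integrable_diff integrable_mult_right Yc_int WS_int)
  have i2: "integrable M (\<lambda>\<omega>. real p * W \<omega>)"
    by (intro integrable_mult_right W_int)
  have "expectation (\<lambda>\<omega>. Y \<omega> / c \<omega> ^ p - real p / real n * (W \<omega> * S n \<omega>) + real p * W \<omega>)
      \<le> expectation (xi n)"
    by (rule integral_mono[OF Bochner_Integration.integrable_add[OF i1 i2] xi_int[OF assms] pw])
  moreover have "expectation (\<lambda>\<omega>. Y \<omega> / c \<omega> ^ p - real p / real n * (W \<omega> * S n \<omega>) + real p * W \<omega>)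
      = expectation (\<lambda>\<omega>. Y \<omega> / c \<omega> ^ p) - real p / real n * (expectation W * real (n - p)) + real p * expectation W"
  proof -
    have "expectation (\<lambda>\<omega>. Y \<omega> / c \<omega> ^ p - real p / real n * (W \<omega> * S n \<omega>) + real p * W \<omega>)
       = expectation (\<lambda>\<omega>. Y \<omega> / c \<omega> ^ p - real p / real n * (W \<omega> * S n \<omega>)) + expectation (\<lambda>\<omega>. real p * W \<omega>)"
      by (rule Bochner_Integration.integral_add[OF i1 i2])
    also have "expectation (\<lambda>\<omega>. Y \<omega> / c \<omega> ^ p - real p / real n * (W \<omega> * S n \<omega>))
       = expectation (\<lambda>\<omega>. Y \<omega> / c \<omega> ^ p) - expectation (\<lambda>\<omega>. real p / real n * (W \<omega> * S n \<omega>))"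
      by (rule Bochner_Integration.integral_diff[OF Yc_int integrable_mult_right[OF WS_int]])
    also have "expectation (\<lambda>\<omega>. real p / real n * (W \<omega> * S n \<omega>)) = real p / real n * (expectation W * real (n - p))"
      by (simp only: integral_mult_right_zero EWS)
    also have "expectation (\<lambda>\<omega>. real p * W \<omega>) = real p * expectation W"
      by (simp only: integral_mult_right_zero)
    finally show ?thesis .
  qed
  moreover have "- real p / real n * (expectation W * real (n - p)) + real p * expectation W \<ge> 0"
  proof -
    have "expectation W \<ge> 0"
    proof (rule integral_nonneg_AE, rule AE_I2)
      fix x assume x: "x \<in> space M"
      have "c x ^ (p+1) > 0" using c1[OF x] by simp
      then show "0 \<le> W x" unfolding W_def using Y_nonneg[of x] by simp
    qed
    moreover have "real (n - p) / real n \<le> 1" using n assms by simp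
    ultimately have "real p * expectation W * (real (n - p) / real n) \<le> real p * expectation W"
      by (intro mult_left_le) auto
    then show ?thesis by (simp add: field_simps)
  qed
  ultimately show ?thesis unfolding c_def by simp
qed


lemma upper:
  fixes L \<eta> :: real
  assumes n: "p < n" and eta: "0 < \<eta>" "\<eta> < 1" and L: "L > 0"
    and mu: "expectation (\<lambda>\<omega>. min (X 0 \<omega>) L) > 1 - \<eta>"
  shows "expectation (xi n) \<le> expectation Y * (real n / (real (n - p) * (1 - \<eta>))) ^ p
     + real n ^ p * exp (- 2 * real (n - p) * (expectation (\<lambda>\<omega>. min (X 0 \<omega>) L) - (1 - \<eta>))\<^sup>2 / L\<^sup>2)"
proof -
  define mL where "mL = expectation (\<lambda>\<omega>. min (X 0 \<omega>) L)"
  define \<epsilon> where "\<epsilon> = mL - (1 - \<eta>)"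
  have \<epsilon>: "\<epsilon> > 0" using mu unfolding \<epsilon>_def mL_def by simp
  interpret H: Hoeffding_ineq_iid M "{p..<n}" "\<lambda>i \<omega>. min (X i \<omega>) L" "\<lambda>\<omega>. min (X 0 \<omega>) L" 0 L "expectation (\<lambda>\<omega>. min (X 0 \<omega>) L)"
  proof unfold_locales
    show "finite {p..<n}" by simp
    show "indep_vars (\<lambda>_. borel) (\<lambda>i \<omega>. min (X i \<omega>) L) {p..<n}"
      using indep_vars_compose2[OF indep_vars_subset[OF indep, of "{p..<n}"], where Y="\<lambda>i x. min x L" and N="\<lambda>_. borel"] by simp
    fix i
    have "distr M borel (\<lambda>\<omega>. min (X i \<omega>) L) = distr (distr M borel (X i)) borel (\<lambda>x. min x L)"
      by (subst distr_distr) (auto simp: comp_def)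
    also have "\<dots> = distr (distr M borel (X 0)) borel (\<lambda>x. min x L)" by (simp only: ident[of i])
    also have "\<dots> = distr M borel (\<lambda>\<omega>. min (X 0 \<omega>) L)"
      by (subst distr_distr) (auto simp: comp_def)
    finally show "distr M borel (\<lambda>\<omega>. min (X i \<omega>) L) = distr M borel (\<lambda>\<omega>. min (X 0 \<omega>) L)" .
  next
    show "random_variable borel (\<lambda>\<omega>. min (X 0 \<omega>) L)" by measurable
    show "AE x in M. min (X 0 x) L \<in> {0..L}"
      using pos L by (intro AE_I2) (auto intro: less_imp_le)
  qed (rule reflexive)
  define B where "B = {x\<in>space M. (\<Sum>i\<in>{p..<n}. min (X i x) L) / real (card {p..<n}) \<le> mL - \<epsilon>}"
  have PB: "prob B \<le> exp (- 2 * real (card {p..<n}) * \<epsilon>\<^sup>2 / (L - 0)\<^sup>2)"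
    unfolding B_def mL_def using H.Hoeffding_ineq_le'[of \<epsilon>] \<epsilon> L n by simp
  have Bsets: "B \<in> sets M" unfolding B_def by measurable
  have thr: "mL - \<epsilon> = 1 - \<eta>" unfolding \<epsilon>_def by simp
  define G where "G x = (if (\<Sum>i\<in>{p..<n}. min (x i) L) / real (card {p..<n}) \<le> 1 - \<eta> then 1 else 0 :: real)" for x :: "nat \<Rightarrow> real"
  define F where "F x = (\<Prod>i<p. x i)" for x :: "nat \<Rightarrow> real"
  define Ind where "Ind \<omega> = (if (\<Sum>i\<in>{p..<n}. min (X i \<omega>) L) / real (card {p..<n}) \<le> 1 - \<eta> then 1 else 0 :: real)" for \<omega>
  have GI: "G (restrict (\<lambda>i. X i \<omega>) {p..<n}) = Ind \<omega>" for \<omega>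
    unfolding G_def Ind_def by simp
  have FQ: "F (restrict (\<lambda>i. X i \<omega>) {..<p}) = Q \<omega>" for \<omega>
    unfolding F_def Q_def by simp
  have Fm: "F \<in> borel_measurable (PiM {..<p} (\<lambda>_. borel))" unfolding F_def by measurable
  have Gm: "G \<in> borel_measurable (PiM {p..<n} (\<lambda>_. borel))" unfolding G_def by measurable
  have Indm[measurable]: "Ind \<in> borel_measurable M" unfolding Ind_def[abs_def] by measurable
  have Ind_B: "Ind \<omega> = indicator B \<omega>" if "\<omega> \<in> space M" for \<omega>
    using that unfolding Ind_def B_def thr by (simp add: indicator_def)
  have Ind_int: "integrable M Ind"
  proof -
    have "integrable M (indicator B :: 'a \<Rightarrow> real)"
      by (rule integrable_real_indicator[OF Bsets]) (simp add: less_top[symmetric])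
    moreover have "integrable M Ind \<longleftrightarrow> integrable M (indicator B :: 'a \<Rightarrow> real)"
      by (rule Bochner_Integration.integrable_cong) (auto simp: Ind_B)
    ultimately show ?thesis by simp
  qed
  have EInd: "expectation Ind = prob B"
  proof -
    have "expectation Ind = expectation (indicator B :: 'a \<Rightarrow> real)"
      by (rule Bochner_Integration.integral_cong[OF refl]) (simp add: Ind_B)
    also have "\<dots> = prob B" using Bsets by (simp add: sets.Int_space_eq2)
    finally show ?thesis .
  qed
  note sp = indep_split[OF Fm Gm, unfolded FQ GI, OF Q_int Ind_int]
  have QI_int: "integrable M (\<lambda>\<omega>. Q \<omega> * Ind \<omega>)" by (rule sp(2))
  have EQI: "expectation (\<lambda>\<omega>. Q \<omega> * Ind \<omega>) = prob B" using sp(1) EQ EInd by simp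
  define K where "K = (real n / (real (n - p) * (1 - \<eta>))) ^ p"
  have K0: "K \<ge> 0" unfolding K_def using eta by simp
  have pw: "xi n \<omega> \<le> Y \<omega> * K + real n ^ p * (Q \<omega> * Ind \<omega>)" if w: "\<omega> \<in> space M" for \<omega>
  proof (cases "(\<Sum>i\<in>{p..<n}. min (X i \<omega>) L) / real (card {p..<n}) \<le> 1 - \<eta>")
    case True
    then have "Ind \<omega> = 1" unfolding Ind_def by simp
    moreover have "xi n \<omega> \<le> real n ^ p * Q \<omega>" using xi_le n w by simp
    moreover have "Y \<omega> * K \<ge> 0" using Y_nonneg K0 by simp
    ultimately show ?thesis by simp
  next
    case False
    then have Ind0: "Ind \<omega> = 0" unfolding Ind_def by simp
    have m: "real (card {p..<n}) = real (n - p)" by simp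
    have mpos: "real (n - p) > 0" using n by simp
    have "(1 - \<eta>) * real (n - p) < (\<Sum>i\<in>{p..<n}. min (X i \<omega>) L)"
      using False mpos by (simp add: m field_simps)
    also have "\<dots> \<le> S n \<omega>" unfolding S_def by (intro sum_mono) simp
    also have "\<dots> \<le> R \<omega> + S n \<omega>" using R_pos[OF w] by simp
    finally have lt: "(1 - \<eta>) * real (n - p) < R \<omega> + S n \<omega>" .
    have d0: "0 < real (n - p) * (1 - \<eta>) / real n" using mpos eta n by simp
    have d1: "real (n - p) * (1 - \<eta>) / real n \<le> (R \<omega> + S n \<omega>) / real n"
      using lt n by (intro divide_right_mono) (auto simp: mult.commute)
    have "xi n \<omega> = Y \<omega> / ((R \<omega> + S n \<omega>) / real n) ^ p" using xi_eq n by simp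
    also have "\<dots> \<le> Y \<omega> / (real (n - p) * (1 - \<eta>) / real n) ^ p"
    proof -
      define d where "d = real (n - p) * (1 - \<eta>) / real n"
      define a where "a = (R \<omega> + S n \<omega>) / real n"
      have d0': "0 < d" using d0 unfolding d_def .
      have d1': "d \<le> a" using d1 unfolding d_def a_def .
      have "Y \<omega> / a ^ p \<le> Y \<omega> / d ^ p"
        by (rule divide_left_mono[OF power_mono[OF d1' less_imp_le[OF d0']] Y_nonneg])
           (use d0' d1' in \<open>intro mult_pos_pos zero_less_power, auto\<close>)
      then show ?thesis unfolding a_def d_def .
    qed
    also have "\<dots> = Y \<omega> * K" unfolding K_def by (simp add: power_divide field_simps)
    finally show ?thesis using Ind0 by simp
  qed
  have "expectation (xi n) \<le> expectation (\<lambda>\<omega>. Y \<omega> * K + real n ^ p * (Q \<omega> * Ind \<omega>))"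
    by (rule integral_mono[OF xi_int[OF less_imp_le[OF n]] _ pw])
       (intro Bochner_Integration.integrable_add integrable_mult_left integrable_mult_right Y_int QI_int)
  also have "\<dots> = expectation Y * K + real n ^ p * prob B"
    using Y_int QI_int EQI by simp
  also have "\<dots> \<le> expectation Y * K + real n ^ p * exp (- 2 * real (card {p..<n}) * \<epsilon>\<^sup>2 / (L - 0)\<^sup>2)"
    using PB by (intro add_left_mono mult_left_mono) auto
  finally show ?thesis unfolding K_def \<epsilon>_def mL_def by simp
qed


lemma mu_conv: "(\<lambda>k. expectation (\<lambda>\<omega>. min (X 0 \<omega>) (real k))) \<longlonglongrightarrow> expectation (X 0)"
proof (rule integral_dominated_convergence[where w="X 0"])
  show "integrable M (X 0)" by (rule int1)
  show "AE x in M. (\<lambda>k. min (X 0 x) (real k)) \<longlonglongrightarrow> X 0 x"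
  proof (rule AE_I2)
    fix x assume x: "x \<in> space M"
    obtain N where N: "X 0 x \<le> real N" using real_arch_simple by blast
    have "eventually (\<lambda>k. min (X 0 x) (real k) = X 0 x) sequentially"
    proof (rule eventually_sequentiallyI[of N])
      fix k assume "N \<le> k"
      then have "real N \<le> real k" by simp
      then have "X 0 x \<le> real k" by (rule order_trans[OF N])
      then show "min (X 0 x) (real k) = X 0 x" by (rule min_absorb1)
    qed
    then show "(\<lambda>k. min (X 0 x) (real k)) \<longlonglongrightarrow> X 0 x" by (rule tendsto_eventually)
  qed
  fix k :: nat
  show "AE x in M. norm (min (X 0 x) (real k)) \<le> X 0 x"
  proof (rule AE_I2)
    fix x assume x: "x \<in> space M"
    have "0 < X 0 x" using pos[OF x] .
    then show "norm (min (X 0 x) (real k)) \<le> X 0 x" by (cases "X 0 x \<le> real k") (auto simp: min_def)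
  qed
next
  show "X 0 \<in> borel_measurable M" by measurable
  fix k :: nat
  show "(\<lambda>\<omega>. min (X 0 \<omega>) (real k)) \<in> borel_measurable M" by measurable
qed

lemma lower_lim: "(\<lambda>n. expectation (\<lambda>\<omega>. Y \<omega> / (1 + R \<omega> / real n) ^ p)) \<longlonglongrightarrow> expectation Y"
proof (rule integral_dominated_convergence[where w="Y"])
  show "integrable M Y" by (rule Y_int)
  show "AE x in M. (\<lambda>n. Y x / (1 + R x / real n) ^ p) \<longlonglongrightarrow> Y x"
  proof (rule AE_I2)
    fix x assume x: "x \<in> space M"
    have "(\<lambda>n. R x / real n) \<longlonglongrightarrow> 0" by (rule lim_const_over_n)
    then have "(\<lambda>n. 1 + R x / real n) \<longlonglongrightarrow> 1 + 0" by (rule tendsto_add[OF tendsto_const])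
    then have "(\<lambda>n. (1 + R x / real n) ^ p) \<longlonglongrightarrow> (1 + 0) ^ p" by (rule tendsto_power)
    then have "(\<lambda>n. Y x / (1 + R x / real n) ^ p) \<longlonglongrightarrow> Y x / (1 + 0) ^ p"
      by (rule tendsto_divide[OF tendsto_const]) simp
    then show "(\<lambda>n. Y x / (1 + R x / real n) ^ p) \<longlonglongrightarrow> Y x" by simp
  qed
  fix n :: nat
  show "AE x in M. norm (Y x / (1 + R x / real n) ^ p) \<le> Y x"
  proof (rule AE_I2)
    fix x assume x: "x \<in> space M"
    have c: "1 \<le> 1 + R x / real n" using R_pos[OF x] by simp
    then have "1 \<le> (1 + R x / real n) ^ p" by (rule one_le_power)
    then have "Y x / (1 + R x / real n) ^ p \<le> Y x / 1" using Y_nonneg[of x]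
      by (intro divide_left_mono) auto
    moreover have "0 \<le> Y x / (1 + R x / real n) ^ p" using Y_nonneg[of x] c by simp
    ultimately show "norm (Y x / (1 + R x / real n) ^ p) \<le> Y x" by simp
  qed
next
  show "Y \<in> borel_measurable M" by measurable
  fix n :: nat
  show "(\<lambda>\<omega>. Y \<omega> / (1 + R \<omega> / real n) ^ p) \<in> borel_measurable M" by measurable
qed

lemma ratio_lim: "(\<lambda>n. real (n - p) / real n) \<longlonglongrightarrow> 1"
proof -
  have l: "(\<lambda>n. 1 - real p / real n) \<longlonglongrightarrow> 1"
    using tendsto_diff[OF tendsto_const lim_const_over_n, of 1 "real p"] by simp
  have e: "eventually (\<lambda>n. 1 - real p / real n = real (n - p) / real n) sequentially"
  proof (rule eventually_sequentiallyI[of "Suc p"])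
    fix n assume n: "Suc p \<le> n"
    then have 1: "real (n - p) = real n - real p" by (simp add: of_nat_diff)
    have 2: "real n > 0" using n by simp
    show "1 - real p / real n = real (n - p) / real n" unfolding 1 using 2 by (simp add: diff_divide_distrib)
  qed
  show ?thesis by (rule Lim_transform_eventually[OF l e])
qed

lemma upper_lim1:
  fixes \<eta> :: real assumes "\<eta> < 1"
  shows "(\<lambda>n. expectation Y * (real n / (real (n - p) * (1 - \<eta>))) ^ p) \<longlonglongrightarrow> expectation Y * (1 / (1 - \<eta>)) ^ p"
proof -
  have "(\<lambda>n. real (n - p) / real n * (1 - \<eta>)) \<longlonglongrightarrow> 1 * (1 - \<eta>)"
    by (rule tendsto_mult[OF ratio_lim tendsto_const])
  then have "(\<lambda>n. 1 / (real (n - p) / real n * (1 - \<eta>))) \<longlonglongrightarrow> 1 / (1 * (1 - \<eta>))"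
    by (rule tendsto_divide[OF tendsto_const]) (use assms in simp)
  then have "(\<lambda>n. expectation Y * (1 / (real (n - p) / real n * (1 - \<eta>))) ^ p) \<longlonglongrightarrow> expectation Y * (1 / (1 * (1 - \<eta>))) ^ p"
    by (intro tendsto_mult[OF tendsto_const] tendsto_power)
  then have l: "(\<lambda>n. expectation Y * (1 / (real (n - p) / real n * (1 - \<eta>))) ^ p) \<longlonglongrightarrow> expectation Y * (1 / (1 - \<eta>)) ^ p"
    by simp
  have e: "eventually (\<lambda>n. expectation Y * (1 / (real (n - p) / real n * (1 - \<eta>))) ^ p
      = expectation Y * (real n / (real (n - p) * (1 - \<eta>))) ^ p) sequentially"
  proof (rule eventually_sequentiallyI[of "Suc p"])
    fix n assume n: "Suc p \<le> n"
    have 1: "real (n - p) > 0" using n by simp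
    have 2: "real n > 0" using n by simp
    have 3: "1 - \<eta> > 0" using assms by simp
    have "1 / (real (n - p) / real n * (1 - \<eta>)) = real n / (real (n - p) * (1 - \<eta>))"
      using 1 2 3 by (simp add: field_simps)
    then show "expectation Y * (1 / (real (n - p) / real n * (1 - \<eta>))) ^ p
      = expectation Y * (real n / (real (n - p) * (1 - \<eta>))) ^ p" by simp
  qed
  show ?thesis by (rule Lim_transform_eventually[OF l e])
qed

lemma upper_lim2:
  fixes c :: real assumes c: "c > 0"
  shows "(\<lambda>n. real n ^ p * exp (- c * real (n - p))) \<longlonglongrightarrow> 0"
proof -
  have h: "filterlim (\<lambda>n. c * real n) at_top sequentially"
    by (rule filterlim_tendsto_pos_mult_at_top[OF tendsto_const c filterlim_real_sequentially])
  have "(\<lambda>n. (c * real n) ^ p / exp (c * real n)) \<longlonglongrightarrow> 0"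
    by (rule filterlim_compose[OF tendsto_power_div_exp_0 h])
  then have l: "(\<lambda>n. exp (c * real p) / c ^ p * ((c * real n) ^ p / exp (c * real n))) \<longlonglongrightarrow> 0"
    by (rule tendsto_mult_right_zero)
  have e: "eventually (\<lambda>n. exp (c * real p) / c ^ p * ((c * real n) ^ p / exp (c * real n))
      = real n ^ p * exp (- c * real (n - p))) sequentially"
  proof (rule eventually_sequentiallyI[of p])
    fix n assume n: "p \<le> n"
    have 1: "- c * real (n - p) = c * real p - c * real n" using n by (simp add: of_nat_diff algebra_simps)
    have 2: "exp (- c * real (n - p)) = exp (c * real p) / exp (c * real n)"
      unfolding 1 by (rule exp_diff)
    have 3: "(c * real n) ^ p = c ^ p * real n ^ p" by (rule power_mult_distrib)
    have 4: "c ^ p > 0" using c by simp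
    show "exp (c * real p) / c ^ p * ((c * real n) ^ p / exp (c * real n)) = real n ^ p * exp (- c * real (n - p))"
      unfolding 2 3 using 4 c by (simp add: field_simps)
  qed
  show ?thesis by (rule Lim_transform_eventually[OF l e])
qed

lemma main_lim: "(\<lambda>n. expectation (xi n)) \<longlonglongrightarrow> expectation Y"
proof (rule order_tendstoI)
  fix y assume y: "y < expectation Y"
  have "eventually (\<lambda>n. y < expectation (\<lambda>\<omega>. Y \<omega> / (1 + R \<omega> / real n) ^ p)) sequentially"
    by (rule order_tendstoD(1)[OF lower_lim y])
  moreover have "eventually (\<lambda>n. p \<le> n) sequentially" by (rule eventually_ge_at_top)
  ultimately show "eventually (\<lambda>n. y < expectation (xi n)) sequentially"
  proof eventually_elim
    case (elim n)
    then show ?case using lower[of n] by linarith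
  qed
next
  fix y assume y: "expectation Y < y"
  define f where "f \<eta> = expectation Y * (1 / (1 - \<eta>)) ^ p" for \<eta> :: real
  have "((\<lambda>\<eta>::real. 1 - \<eta>) \<longlongrightarrow> 1 - 0) (at_right 0)"
    by (intro tendsto_diff tendsto_const tendsto_ident_at)
  then have "((\<lambda>\<eta>::real. 1 / (1 - \<eta>)) \<longlongrightarrow> 1 / (1 - 0)) (at_right 0)"
    by (rule tendsto_divide[OF tendsto_const]) simp
  then have "(f \<longlongrightarrow> expectation Y * (1 / (1 - 0)) ^ p) (at_right 0)"
    unfolding f_def by (intro tendsto_mult[OF tendsto_const] tendsto_power)
  then have "(f \<longlongrightarrow> expectation Y) (at_right 0)" by simp
  then have ev1: "eventually (\<lambda>\<eta>. f \<eta> < y) (at_right 0)" by (rule order_tendstoD(2)[OF _ y])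
  have ev2: "eventually (\<lambda>\<eta>::real. \<eta> < 1) (at_right 0)"
    unfolding eventually_at_right_field by (rule exI[of _ 1]) auto
  from eventually_conj[OF ev1 ev2] obtain b :: real where b: "b > 0" and
    bP: "\<And>\<eta>. \<eta> > 0 \<Longrightarrow> \<eta> < b \<Longrightarrow> f \<eta> < y \<and> \<eta> < 1"
    unfolding eventually_at_right_field by blast
  define \<eta> where "\<eta> = b / 2"
  have eta: "0 < \<eta>" "\<eta> < 1" "f \<eta> < y" using bP[of \<eta>] b unfolding \<eta>_def by auto
  have "1 - \<eta> < expectation (X 0)" using mean eta by simp
  from order_tendstoD(1)[OF mu_conv this]
  have "eventually (\<lambda>k. 1 - \<eta> < expectation (\<lambda>\<omega>. min (X 0 \<omega>) (real k)) \<and> 1 \<le> k) sequentially"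
    using eventually_ge_at_top[of 1] by (rule eventually_conj)
  then obtain k :: nat where k: "1 - \<eta> < expectation (\<lambda>\<omega>. min (X 0 \<omega>) (real k))" "1 \<le> k"
    unfolding eventually_sequentially by blast
  define L where "L = real k"
  have L: "L > 0" using k unfolding L_def by simp
  define \<delta> where "\<delta> = expectation (\<lambda>\<omega>. min (X 0 \<omega>) L) - (1 - \<eta>)"
  have \<delta>: "\<delta> > 0" using k(1) unfolding \<delta>_def L_def by simp
  define c where "c = 2 * \<delta>\<^sup>2 / L\<^sup>2"
  have c: "c > 0" using \<delta> L unfolding c_def by simp
  have "(\<lambda>n. expectation Y * (real n / (real (n - p) * (1 - \<eta>))) ^ p + real n ^ p * exp (- c * real (n - p)))
        \<longlonglongrightarrow> f \<eta> + 0"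
    unfolding f_def by (intro tendsto_add upper_lim1 upper_lim2 c eta)
  then have "eventually (\<lambda>n. expectation Y * (real n / (real (n - p) * (1 - \<eta>))) ^ p + real n ^ p * exp (- c * real (n - p)) < y) sequentially"
    by (rule order_tendstoD(2)) (use eta in simp)
  moreover have "eventually (\<lambda>n. p < n) sequentially" by (rule eventually_gt_at_top)
  ultimately show "eventually (\<lambda>n. expectation (xi n) < y) sequentially"
  proof eventually_elim
    case (elim n)
    have kL: "1 - \<eta> < expectation (\<lambda>\<omega>. min (X 0 \<omega>) L)" using k(1) unfolding L_def .
    have "expectation (xi n) \<le> expectation Y * (real n / (real (n - p) * (1 - \<eta>))) ^ p
     + real n ^ p * exp (- 2 * real (n - p) * (expectation (\<lambda>\<omega>. min (X 0 \<omega>) L) - (1 - \<eta>))\<^sup>2 / L\<^sup>2)"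
      by (rule upper[OF elim(2) eta(1,2) L kL])
    also have "- 2 * real (n - p) * (expectation (\<lambda>\<omega>. min (X 0 \<omega>) L) - (1 - \<eta>))\<^sup>2 / L\<^sup>2 = - c * real (n - p)"
      unfolding c_def \<delta>_def by simp
    finally show ?case using elim(1) by linarith
  qed
qed

end

theorem lemma3:
  fixes M :: "'a measure" and X :: "nat \<Rightarrow> 'a \<Rightarrow> real" and p :: nat
  assumes "prob_space M"
    and rv: "\<And>i. X i \<in> borel_measurable M"
    and indep: "prob_space.indep_vars M (\<lambda>_. borel) X UNIV"
    and ident: "\<And>i. distr M borel (X i) = distr M borel (X 0)"
    and pos: "\<And>i \<omega>. \<omega> \<in> space M \<Longrightarrow> X i \<omega> > 0"
    and int1: "integrable M (X 0)"
    and mean: "prob_space.expectation M (X 0) = 1"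
    and p2: "p \<ge> 2"
    and intp: "integrable M (\<lambda>\<omega>. X 0 \<omega> ^ p)"
  shows "(\<lambda>n. prob_space.expectation M
            (\<lambda>\<omega>. (\<Prod>i<p. (X i \<omega>)\<^sup>2) / ((\<Sum>i<n. X i \<omega>) / real n) ^ p))
         \<longlonglongrightarrow> (prob_space.expectation M (\<lambda>\<omega>. (X 0 \<omega>)\<^sup>2)) ^ p"
proof -
  interpret L3 M X p
    by (intro L3.intro L3_axioms.intro) (fact assms(1), fact rv, fact indep, fact ident, fact pos, fact int1, fact mean, fact p2, fact intp)
  have 1: "xi n = (\<lambda>\<omega>. (\<Prod>i<p. (X i \<omega>)\<^sup>2) / ((\<Sum>i<n. X i \<omega>) / real n) ^ p)" for n
    by (rule ext) (simp only: xi_def Y_def)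
  have "(\<lambda>n. expectation (xi n)) \<longlonglongrightarrow> expectation Y" by (rule main_lim)
  then show ?thesis unfolding 1 EY .
qed

end
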